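(* Let $\Gamma\in\mathcal S$ have $n$ vertices and let $\varphi$ be an embedding into $\mathbb Z^n$ such that exactly one index is of type (9), exactly one is of type (5), exactly one index $k$ is of type (2), and every other index is of type (4) or (7). Let $v$ be the unique vertex whose image $\varphi(v)$ has nonzero coefficient at $E_k$. Then $d(v)=-2$; in fact $\varphi(v)=E_{i_v}-E_k$ for some index $i_v$.
   Context: A plumbing tree is a finite tree $\Gamma$ each of whose vertices $v$ carries an integer decoration $d(v)$. $\Gamma$ is minimal if no vertex has decoration $-1$. For $n\ge 1$ let $(\mathbb Z^n,Q_n)$ be the lattice with basis $E_1,\dots,E_n$ and $Q_n(E_i,E_j)=-\delta_{ij}$, and let $K=\sum_{i=1}^n E_i$. A plumbing tree $\Gamma$ on $n$ vertices is a symplectic plumbing tree if there is a map $\varphi$ (an embedding) from its vertex set to $\mathbb Z^n$ such that: for distinct vertices $v_1,v_2$, $Q_n(\varphi(v_1),\varphi(v_2))$ is $1$ if they are adjacent and $0$ otherwise; $Q_n(\varphi(v),\varphi(v))=d(v)$ for every $v$; and $Q_n(\varphi(v),K)+Q_n(\varphi(v),\varphi(v))=-2$ for every $v$. $\mathcal S$ is the set of minimal, connected symplectic plumbing trees. Index types: write $\varphi(v)=\sum_i a_{v,i}E_i$; for an index $i$ consider the multiset of nonzero coefficients $a_{v,i}$ as $v$ ranges over all vertices. Index $i$ is of type (1) if this multiset is $\{1\}$, (2) if $\{-1\}$, (3) if $\{-2\}$, (4) if $\{1,-1\}$, (5) if $\{1,-2\}$, (6) if $\{-1,-1\}$, (7)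 if $\{1,-1,-1\}$, (9) if $\{1,-1,-1,-1\}$, and (10) if it is empty. *)

theory Defs
  imports Main "HOL-Library.Multiset"
begin

text \<open>Vectors in Z^n are modelled as functions nat => int; index i < n
  corresponds to basis vector E_(i+1). Coefficients at indices >= n are required to be 0.\<close>

definition unitv :: "nat \<Rightarrow> (nat \<Rightarrow> int)" where
  "unitv i = (\<lambda>j. if j = i then 1 else 0)"

definition Qn :: "nat \<Rightarrow> (nat \<Rightarrow> int) \<Rightarrow> (nat \<Rightarrow> int) \<Rightarrow> int" where
  "Qn n x y = - (\<Sum>i<n. x i * y i)"

definition Kn :: "nat \<Rightarrow> (nat \<Rightarrow> int)" where
  "Kn n = (\<lambda>i. if i < n then 1 else 0)"

definition is_tree :: "'v set \<Rightarrow> ('v \<Rightarrow> 'v \<Rightarrow> bool) \<Rightarrow> bool" where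
  "is_tree V E \<longleftrightarrow> finite V \<and> V \<noteq> {} \<and>
     (\<forall>x y. E x y \<longrightarrow> x \<in> V \<and> y \<in> V \<and> x \<noteq> y \<and> E y x) \<and>
     (\<forall>x\<in>V. \<forall>y\<in>V. E\<^sup>*\<^sup>* x y) \<and>
     card {{x, y} | x y. E x y} + 1 = card V"

definition minimal_plumbing :: "'v set \<Rightarrow> ('v \<Rightarrow> int) \<Rightarrow> bool" where
  "minimal_plumbing V d \<longleftrightarrow> (\<forall>v\<in>V. d v \<noteq> -1)"

definition sympl_embedding ::
  "'v set \<Rightarrow> ('v \<Rightarrow> 'v \<Rightarrow> bool) \<Rightarrow> ('v \<Rightarrow> int) \<Rightarrow> ('v \<Rightarrow> nat \<Rightarrow> int) \<Rightarrow> bool" where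
  "sympl_embedding V E d \<phi> \<longleftrightarrow>
     (\<forall>v\<in>V. \<forall>j\<ge>card V. \<phi> v j = 0) \<and>
     (\<forall>v1\<in>V. \<forall>v2\<in>V. v1 \<noteq> v2 \<longrightarrow>
        Qn (card V) (\<phi> v1) (\<phi> v2) = (if E v1 v2 then 1 else 0)) \<and>
     (\<forall>v\<in>V. Qn (card V) (\<phi> v) (\<phi> v) = d v) \<and>
     (\<forall>v\<in>V. Qn (card V) (\<phi> v) (Kn (card V)) + Qn (card V) (\<phi> v) (\<phi> v) = -2)"

definition symplectic_plumbing_tree :: "'v set \<Rightarrow> ('v \<Rightarrow> 'v \<Rightarrow> bool) \<Rightarrow> ('v \<Rightarrow> int) \<Rightarrow> bool" where
  "symplectic_plumbing_tree V E d \<longleftrightarrow> is_tree V E \<and> (\<exists>\<phi>. sympl_embedding V E d \<phi>)"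

definition in_S :: "'v set \<Rightarrow> ('v \<Rightarrow> 'v \<Rightarrow> bool) \<Rightarrow> ('v \<Rightarrow> int) \<Rightarrow> bool" where
  "in_S V E d \<longleftrightarrow> symplectic_plumbing_tree V E d \<and> minimal_plumbing V d"

definition index_coeffs :: "'v set \<Rightarrow> ('v \<Rightarrow> nat \<Rightarrow> int) \<Rightarrow> nat \<Rightarrow> int multiset" where
  "index_coeffs V \<phi> i = {# \<phi> v i. v \<in># filter_mset (\<lambda>v. \<phi> v i \<noteq> 0) (mset_set V) #}"

definition type2 where "type2 V \<phi> i \<longleftrightarrow> index_coeffs V \<phi> i = {#-1#}"
definition type4 where "type4 V \<phi> i \<longleftrightarrow> index_coeffs V \<phi> i = {#1, -1#}"
definition type5 where "type5 V \<phi> i \<longleftrightarrow> index_coeffs V \<phi> i = {#1, -2#}"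
definition type7 where "type7 V \<phi> i \<longleftrightarrow> index_coeffs V \<phi> i = {#1, -1, -1#}"
definition type9 where "type9 V \<phi> i \<longleftrightarrow> index_coeffs V \<phi> i = {#1, -1, -1, -1#}"

end

theory Submission
  imports Defs
begin


lemma count_ic:
  assumes "finite V" "c \<noteq> 0"
  shows "count (index_coeffs V \<phi> i) c = card {x\<in>V. \<phi> x i = c}"
proof -
  have "count (index_coeffs V \<phi> i) c = (\<Sum>y\<in>(\<lambda>v. \<phi> v i) -` {c} \<inter> {x\<in>V. \<phi> x i \<noteq> 0}. 1)"
    unfolding index_coeffs_def using assms by (simp add: count_image_mset)
  also have "(\<lambda>v. \<phi> v i) -` {c} \<inter> {x\<in>V. \<phi> x i \<noteq> 0} = {x\<in>V. \<phi> x i = c}"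
    using assms by auto
  finally show ?thesis by simp
qed

lemma mem_ic:
  assumes "finite V" "x \<in> V" "\<phi> x i \<noteq> 0"
  shows "\<phi> x i \<in># index_coeffs V \<phi> i"
  unfolding index_coeffs_def using assms by auto

lemma card_le1_unique: "finite A \<Longrightarrow> card A \<le> 1 \<Longrightarrow> x \<in> A \<Longrightarrow> y \<in> A \<Longrightarrow> x = y"
  by (metis One_nat_def card_le_Suc0_iff_eq)


lemma cross_edge:
  assumes "E\<^sup>*\<^sup>* a b" "a \<in> C" "b \<notin> C"
  shows "\<exists>p q. E p q \<and> p \<in> C \<and> q \<notin> C"
  using assms by (induction rule: rtranclp_induct) auto

lemma sum_le_member_nonpos:
  fixes f :: "'a \<Rightarrow> int"
  assumes "finite A" "z \<in> A" "\<forall>x\<in>A. f x \<le> 0"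
  shows "sum f A \<le> f z"
proof -
  have "sum f A = f z + sum f (A - {z})" using assms by (simp add: sum.remove)
  moreover have "sum f (A - {z}) \<le> 0" using assms by (intro sum_nonpos) auto
  ultimately show ?thesis by simp
qed

lemma main_contra:
  fixes V :: "'v set" and E :: "'v \<Rightarrow> 'v \<Rightarrow> bool" and \<phi> :: "'v \<Rightarrow> nat \<Rightarrow> int" and n :: nat
  assumes fin: "finite V"
    and Ein: "\<And>x y. E x y \<Longrightarrow> x \<in> V \<and> y \<in> V \<and> x \<noteq> y"
    and conn: "\<forall>x\<in>V. \<forall>y\<in>V. E\<^sup>*\<^sup>* x y"
    and dot: "\<And>x y. x \<in> V \<Longrightarrow> y \<in> V \<Longrightarrow> x \<noteq> y \<Longrightarrow>
              (\<Sum>i<n. \<phi> x i * \<phi> y i) = (if E x y then -1 else 0)"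
    and H1: "\<And>x i. x \<in> V \<Longrightarrow> i < n \<Longrightarrow> \<phi> x i \<le> 1"
    and H2: "\<And>x y i. x \<in> V \<Longrightarrow> y \<in> V \<Longrightarrow> i < n \<Longrightarrow> \<phi> x i > 0 \<Longrightarrow> \<phi> y i > 0 \<Longrightarrow> x = y"
    and H3: "\<And>x i j. x \<in> V \<Longrightarrow> i < n \<Longrightarrow> j < n \<Longrightarrow> \<phi> x i > 0 \<Longrightarrow> \<phi> x j > 0 \<Longrightarrow> i = j"
    and H4: "\<And>x. x \<in> V \<Longrightarrow> \<exists>y\<in>V. \<exists>i<n. \<phi> y i > 0 \<and> \<phi> x i < 0"
    and H5: "w \<in> V" "\<And>i. i < n \<Longrightarrow> \<phi> w i \<le> 0"
  shows False
proof -
  define R where "R = {(y,x). y \<in> V \<and> x \<in> V \<and> (\<exists>i<n. \<phi> y i > 0 \<and> \<phi> x i < 0)}"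
  have finR: "finite R" 
  proof -
    have "R \<subseteq> V \<times> V" unfolding R_def by auto
    thus ?thesis using fin finite_subset by blast
  qed
  have "\<not> wf R"
  proof
    assume "wf R"
    then obtain x where x: "x \<in> V" "\<And>y. (y,x) \<in> R \<Longrightarrow> y \<notin> V"
      using H5(1) by (metis wfE_min)
    from H4[OF x(1)] obtain y where "y \<in> V" "(y,x) \<in> R" unfolding R_def using x(1) by blast
    thus False using x(2) by blast
  qed
  hence "\<not> acyclic R" using finR finite_acyclic_wf by blast
  then obtain x0 where x0: "(x0,x0) \<in> R\<^sup>+" unfolding acyclic_def by blast
  define C where "C = {y. (y,x0) \<in> R\<^sup>+}"
  have RV: "(a,b) \<in> R \<Longrightarrow> a \<in> V \<and> b \<in> V" for a b unfolding R_def by auto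
  have CV: "C \<subseteq> V" unfolding C_def using RV by (auto dest: tranclD)
  have x0C: "x0 \<in> C" unfolding C_def using x0 by simp
  have predC: "y \<in> C" if "(y,z) \<in> R" "z \<in> C" for y z
    using that unfolding C_def by (simp add: trancl_into_trancl2)
  have succC: "\<exists>z\<in>C. (y,z) \<in> R" if "y \<in> C" for y
  proof -
    from that have "(y,x0) \<in> R\<^sup>+" unfolding C_def by simp
    then obtain z where z: "(y,z) \<in> R" "(z,x0) \<in> R\<^sup>*" by (meson tranclD)
    have "z \<in> C"
    proof (cases "z = x0")
      case True thus ?thesis using x0C by simp
    next
      case False thus ?thesis using z(2) unfolding C_def by (simp add: rtrancl_eq_or_trancl)
    qed
    thus ?thesis using z(1) by blast
  qed
  have wC: "w \<notin> C"
  proof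
    assume "w \<in> C"
    then obtain z i where "i < n" "\<phi> w i > 0" using succC unfolding R_def by blast
    thus False using H5(2) by force
  qed
  define B where "B = V - C"
  have finC: "finite C" using CV fin finite_subset by blast
  have finB: "finite B" unfolding B_def using fin by simp
  obtain p q where pq: "E p q" "p \<in> C" "q \<notin> C"
    using cross_edge[of E x0 w C] conn x0C wC CV H5(1) by blast
  have qB: "q \<in> B" unfolding B_def using pq Ein by blast
  have col: "(\<Sum>y\<in>C. \<phi> y i) * (\<Sum>z\<in>B. \<phi> z i) \<ge> 0" if i: "i < n" for i
  proof (cases "\<exists>y\<in>V. \<phi> y i > 0")
    case False
    have "(\<Sum>y\<in>C. \<phi> y i) \<le> 0" using False CV by (intro sum_nonpos) force
    moreover have "(\<Sum>z\<in>B. \<phi> z i) \<le> 0" using False unfolding B_def by (intro sum_nonpos) force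
    ultimately show ?thesis by (simp add: mult_nonpos_nonpos)
  next
    case True
    then obtain y where y: "y \<in> V" "\<phi> y i > 0" by blast
    have oth: "\<phi> y' i \<le> 0" if "y' \<in> V" "y' \<noteq> y" for y'
      using H2[OF that(1) y(1) i] y(2) that(2) by force
    show ?thesis
    proof (cases "y \<in> C")
      case True
      then obtain z where z: "z \<in> C" "(y,z) \<in> R" using succC by blast
      then obtain j where j: "j < n" "\<phi> y j > 0" "\<phi> z j < 0" unfolding R_def by blast
      have "j = i" using H3[OF y(1) j(1) i j(2) y(2)] .
      hence zi: "\<phi> z i < 0" using j by simp
      have zy: "z \<noteq> y" using zi y(2) by auto
      have "(\<Sum>y\<in>C. \<phi> y i) = \<phi> y i + (\<Sum>y\<in>C-{y}. \<phi> y i)" using True finC by (simp add: sum.remove)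
      also have "(\<Sum>y\<in>C-{y}. \<phi> y i) \<le> \<phi> z i"
        using z(1) zy oth CV finC by (intro sum_le_member_nonpos) auto
      finally have s1: "(\<Sum>y\<in>C. \<phi> y i) \<le> 0" using H1[OF y(1) i] zi by linarith
      have s2: "(\<Sum>z\<in>B. \<phi> z i) \<le> 0" using True oth unfolding B_def by (intro sum_nonpos) auto
      show ?thesis using s1 s2 by (simp add: mult_nonpos_nonpos)
    next
      case False
      have "\<phi> z i = 0" if "z \<in> C" for z
      proof (rule ccontr)
        assume ne: "\<phi> z i \<noteq> 0"
        have zV: "z \<in> V" using that CV by auto
        show False
        proof (cases "\<phi> z i > 0")
          case True thus False using H2[OF zV y(1) i True y(2)] that False by simp
        next
          case False2: False
          hence "(y,z) \<in> R" unfolding R_def using y zV i ne by force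
          thus False using predC that False by blast
        qed
      qed
      hence "(\<Sum>y\<in>C. \<phi> y i) = 0" by simp
      thus ?thesis by simp
    qed
  qed
  have "0 \<le> (\<Sum>i<n. (\<Sum>y\<in>C. \<phi> y i) * (\<Sum>z\<in>B. \<phi> z i))"
    using col by (intro sum_nonneg) auto
  also have "\<dots> = (\<Sum>y\<in>C. \<Sum>z\<in>B. \<Sum>i<n. \<phi> y i * \<phi> z i)"
    by (simp add: sum_product sum.swap[of _ "{..<n}"])
  also have "\<dots> < 0"
  proof -
    have dn: "(\<Sum>i<n. \<phi> y i * \<phi> z i) \<le> 0" if "y \<in> C" "z \<in> B" for y z
    proof -
      have "y \<in> V" "z \<in> V" "y \<noteq> z" using that CV unfolding B_def by auto
      thus ?thesis using dot by simp
    qed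
    have dpq: "(\<Sum>i<n. \<phi> p i * \<phi> q i) = -1"
      using dot[of p q] pq Ein by auto
    have "(\<Sum>z\<in>B. \<Sum>i<n. \<phi> p i * \<phi> z i) \<le> (\<Sum>i<n. \<phi> p i * \<phi> q i)"
      using dn pq(2) qB finB by (intro sum_le_member_nonpos) auto
    hence ip: "(\<Sum>z\<in>B. \<Sum>i<n. \<phi> p i * \<phi> z i) < 0" using dpq by simp
    have "(\<Sum>y\<in>C. \<Sum>z\<in>B. \<Sum>i<n. \<phi> y i * \<phi> z i) \<le> (\<Sum>z\<in>B. \<Sum>i<n. \<phi> p i * \<phi> z i)"
      using dn pq(2) finC by (intro sum_le_member_nonpos) (auto intro: sum_nonpos)
    thus ?thesis using ip by simp
  qed
  finally show False by simp
qed

lemma two_le_sum: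
  fixes f :: "nat \<Rightarrow> int"
  assumes "finite A" "\<forall>x\<in>A. 0 \<le> f x" "i \<in> A" "j \<in> A" "i \<noteq> j"
  shows "f i + f j \<le> sum f A"
proof -
  have "sum f {i,j} \<le> sum f A" using assms by (intro sum_mono2) auto
  thus ?thesis using assms by simp
qed

lemma sq_plus_nonneg: "0 \<le> (a::int) * a + a"
proof -
  have e: "a * a + a = a * (a + 1)" by (simp add: algebra_simps)
  show ?thesis
  proof (cases "a \<ge> 0")
    case True thus ?thesis unfolding e by simp
  next
    case False thus ?thesis unfolding e by (intro mult_nonpos_nonpos) auto
  qed
qed
lemma vals_gen:
  fixes c :: int
  assumes "M = {#-1#} \<or> M = {#1, -1, -1, -1#} \<or> M = {#1, -2#} \<or> M = {#1, -1#} \<or> M = {#1, -1, -1#}"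
    "c \<in># M"
  shows "c = 1 \<or> c = -1 \<or> c = -2"
  using assms by (elim disjE) auto
lemma m2_gen:
  fixes M :: "int multiset"
  assumes "M = {#-1#} \<or> M = {#1, -1, -1, -1#} \<or> M = {#1, -2#} \<or> M = {#1, -1#} \<or> M = {#1, -1, -1#}"
    "-2 \<in># M"
  shows "M = {#1, -2#}"
  using assms by (elim disjE) auto
lemma one_gen:
  fixes M :: "int multiset"
  assumes "M = {#-1#} \<or> M = {#1, -1, -1, -1#} \<or> M = {#1, -2#} \<or> M = {#1, -1#} \<or> M = {#1, -1, -1#}"
  shows "count M 1 \<le> 1"
  using assms by (elim disjE) auto
lemma one_gen2:
  fixes M :: "int multiset"
  assumes "M = {#1, -1, -1, -1#} \<or> M = {#1, -2#} \<or> M = {#1, -1#} \<or> M = {#1, -1, -1#}"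
  shows "count M 1 = 1"
  using assms by (elim disjE) auto
theorem proposition5p4:
  fixes V :: "'v set" and E :: "'v \<Rightarrow> 'v \<Rightarrow> bool" and d :: "'v \<Rightarrow> int"
    and \<phi> :: "'v \<Rightarrow> nat \<Rightarrow> int" and k :: nat
  assumes S: "in_S V E d"
    and emb: "sympl_embedding V E d \<phi>"
    and t9: "card {i. i < card V \<and> type9 V \<phi> i} = 1"
    and t5: "card {i. i < card V \<and> type5 V \<phi> i} = 1"
    and t2: "{i. i < card V \<and> type2 V \<phi> i} = {k}"
    and rest: "\<forall>i < card V. \<not> type9 V \<phi> i \<and> \<not> type5 V \<phi> i \<and> \<not> type2 V \<phi> i
                 \<longrightarrow> type4 V \<phi> i \<or> type7 V \<phi> i"
    and v: "v \<in> V" "\<phi> v k \<noteq> 0"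
  shows "d v = -2 \<and> (\<exists>i < card V. \<phi> v = (\<lambda>j. unitv i j - unitv k j))"
proof -
  define n where "n = card V"
  have tree: "is_tree V E" and minl: "minimal_plumbing V d"
    using S unfolding in_S_def symplectic_plumbing_tree_def by auto
  have fin: "finite V" using tree unfolding is_tree_def by auto
  have Ein: "\<And>x y. E x y \<Longrightarrow> x \<in> V \<and> y \<in> V \<and> x \<noteq> y" using tree unfolding is_tree_def by blast
  have conn: "\<forall>x\<in>V. \<forall>y\<in>V. E\<^sup>*\<^sup>* x y" using tree unfolding is_tree_def by blast
  have zero: "\<And>x j. x \<in> V \<Longrightarrow> j \<ge> n \<Longrightarrow> \<phi> x j = 0" using emb unfolding sympl_embedding_def n_def by blast
  have Qoff: "\<And>x y. x \<in> V \<Longrightarrow> y \<in> V \<Longrightarrow> x \<noteq> y \<Longrightarrow> Qn n (\<phi> x) (\<phi> y) = (if E x y then 1 else 0)"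
    using emb unfolding sympl_embedding_def n_def by blast
  have Qd: "\<And>x. x \<in> V \<Longrightarrow> Qn n (\<phi> x) (\<phi> x) = d x"
    using emb unfolding sympl_embedding_def n_def by blast
  have Qa: "\<And>x. x \<in> V \<Longrightarrow> Qn n (\<phi> x) (Kn n) + Qn n (\<phi> x) (\<phi> x) = -2"
    using emb unfolding sympl_embedding_def n_def by blast
  have kn: "k < n" using t2 unfolding n_def by auto
  have ty: "type2 V \<phi> i \<or> type9 V \<phi> i \<or> type5 V \<phi> i \<or> type4 V \<phi> i \<or> type7 V \<phi> i" if "i < n" for i
    using rest that unfolding n_def by blast
  have ty2: "type2 V \<phi> i \<longleftrightarrow> i = k" if "i < n" for i
    using t2 that unfolding n_def by blast
  have ty_nk: "type9 V \<phi> i \<or> type5 V \<phi> i \<or> type4 V \<phi> i \<or> type7 V \<phi> i" if "i < n" "i \<noteq> k" for i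
    using ty[OF that(1)] ty2[OF that(1)] that(2) by blast
  have cnt: "\<And>c i. c \<noteq> 0 \<Longrightarrow> count (index_coeffs V \<phi> i) c = card {x\<in>V. \<phi> x i = c}"
    using count_ic[OF fin] by blast
  have finc: "\<And>i c. finite {x\<in>V. \<phi> x i = c}" using fin by simp
  have tyM: "index_coeffs V \<phi> i = {#-1#} \<or> index_coeffs V \<phi> i = {#1, -1, -1, -1#} \<or>
      index_coeffs V \<phi> i = {#1, -2#} \<or> index_coeffs V \<phi> i = {#1, -1#} \<or> index_coeffs V \<phi> i = {#1, -1, -1#}"
    if "i < n" for i
    using ty[OF that] unfolding type2_def type9_def type5_def type4_def type7_def by blast
  have tyM2: "index_coeffs V \<phi> i = {#1, -1, -1, -1#} \<or>
      index_coeffs V \<phi> i = {#1, -2#} \<or> index_coeffs V \<phi> i = {#1, -1#} \<or> index_coeffs V \<phi> i = {#1, -1, -1#}"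
    if "i < n" "i \<noteq> k" for i
    using ty_nk[OF that] unfolding type9_def type5_def type4_def type7_def by blast
  have vals: "\<phi> x i = 1 \<or> \<phi> x i = -1 \<or> \<phi> x i = -2" if "x \<in> V" "i < n" "\<phi> x i \<noteq> 0" for x i
    using vals_gen[OF tyM[OF that(2)] mem_ic[of V x \<phi> i, OF fin that(1) that(3)]] .
  have m2: "type5 V \<phi> i" if "x \<in> V" "i < n" "\<phi> x i = -2" for x i
  proof -
    have m: "-2 \<in># index_coeffs V \<phi> i" using mem_ic[of V x \<phi> i, OF fin that(1)] that(3) by simp
    show ?thesis using m2_gen[OF tyM[OF that(2)] m] unfolding type5_def .
  qed
  have kval: "\<phi> x k = -1" if "x \<in> V" "\<phi> x k \<noteq> 0" for x
  proof -
    have m: "\<phi> x k \<in># index_coeffs V \<phi> k" using mem_ic[of V x \<phi> k, OF fin that(1) that(2)] .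
    thus ?thesis using ty2[OF kn] unfolding type2_def by simp
  qed
  have kuniq: "x = v" if "x \<in> V" "\<phi> x k \<noteq> 0" for x
  proof -
    have "card {x\<in>V. \<phi> x k = -1} = 1" using cnt[of "-1" k] ty2[OF kn] unfolding type2_def by simp
    then obtain z where z: "{x\<in>V. \<phi> x k = -1} = {z}" by (rule card_1_singletonE)
    have "x \<in> {x\<in>V. \<phi> x k = -1}" using kval[OF that] that(1) by simp
    moreover have "v \<in> {x\<in>V. \<phi> x k = -1}" using kval[OF v] v(1) by simp
    ultimately show ?thesis unfolding z by simp
  qed
  have one_le: "card {x\<in>V. \<phi> x i = 1} \<le> 1" if "i < n" for i
    using one_gen[OF tyM[OF that]] cnt[of 1 i] by simp
  have owner: "\<exists>y\<in>V. \<phi> y i = 1" if "i < n" "i \<noteq> k" for i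
  proof -
    have "card {x\<in>V. \<phi> x i = 1} = 1" using one_gen2[OF tyM2[OF that]] cnt[of 1 i] by simp
    hence "{x\<in>V. \<phi> x i = 1} \<noteq> {}" by force
    thus ?thesis by blast
  qed
  have adj: "(\<Sum>i<n. \<phi> x i * \<phi> x i + \<phi> x i) = 2" if "x \<in> V" for x
  proof -
    have "Qn n (\<phi> x) (Kn n) = - (\<Sum>i<n. \<phi> x i)" unfolding Qn_def Kn_def by simp
    thus ?thesis using Qa[OF that] unfolding Qn_def by (simp add: sum.distrib)
  qed
  have spec_uniq: "i = j" if "x \<in> V" "i < n" "j < n"
      "\<phi> x i = 1 \<or> \<phi> x i = -2" "\<phi> x j = 1 \<or> \<phi> x j = -2" for x i j
  proof (rule ccontr)
    assume "i \<noteq> j"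
    hence "(\<phi> x i * \<phi> x i + \<phi> x i) + (\<phi> x j * \<phi> x j + \<phi> x j) \<le> (\<Sum>i<n. \<phi> x i * \<phi> x i + \<phi> x i)"
      using that by (intro two_le_sum) (auto simp: sq_plus_nonneg)
    thus False using adj[OF that(1)] that(4,5) by auto
  qed
  have spec_ex: "\<exists>i<n. \<phi> x i = 1 \<or> \<phi> x i = -2" if "x \<in> V" for x
  proof (rule ccontr)
    assume "\<not> ?thesis"
    hence "\<forall>i<n. \<phi> x i * \<phi> x i + \<phi> x i = 0" using vals[OF that] by fastforce
    thus False using adj[OF that] by simp
  qed
  have pos1: "\<phi> x i = 1" if "x \<in> V" "i < n" "\<phi> x i > 0" for x i
    using vals[OF that(1,2)] that(3) by fastforce
  have dotE: "(\<Sum>i<n. \<phi> x i * \<phi> y i) = (if E x y then -1 else 0)"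
    if "x \<in> V" "y \<in> V" "x \<noteq> y" for x y
    using Qoff[OF that] unfolding Qn_def by (auto split: if_splits)
  have goal: "\<exists>a<n. \<phi> v a = 1 \<and> (\<forall>j<n. j \<noteq> a \<longrightarrow> j \<noteq> k \<longrightarrow> \<phi> v j = 0)"
  proof (rule ccontr)
    assume HC: "\<not> ?thesis"
    have inm: "\<exists>i<n. i \<noteq> k \<and> \<phi> x i = -1" if xV: "x \<in> V" for x
    proof (cases "\<exists>p<n. \<phi> x p = -2")
      case True
      then obtain p where p: "p < n" "\<phi> x p = -2" by blast
      have "type5 V \<phi> p" using m2[OF xV p] .
      hence "count (index_coeffs V \<phi> p) 1 = 1" unfolding type5_def by simp
      hence "card {x\<in>V. \<phi> x p = 1} = 1" using cnt[of 1 p] by simp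
      hence "{x\<in>V. \<phi> x p = 1} \<noteq> {}" by force
      then obtain u where u: "u \<in> V" "\<phi> u p = 1" by blast
      have ux: "u \<noteq> x" using u p by auto
      have "(\<Sum>i<n. \<phi> u i * \<phi> x i) \<ge> -1" using dotE[OF u(1) xV ux] by simp
      moreover have "(\<Sum>i<n. \<phi> u i * \<phi> x i) = \<phi> u p * \<phi> x p + (\<Sum>i\<in>{..<n}-{p}. \<phi> u i * \<phi> x i)"
        using p(1) by (simp add: sum.remove)
      ultimately have pos: "(\<Sum>i\<in>{..<n}-{p}. \<phi> u i * \<phi> x i) > 0" using u p by simp
      have "\<exists>i\<in>{..<n}-{p}. \<phi> u i * \<phi> x i > 0"
      proof (rule ccontr)
        assume "\<not> ?thesis"
        hence "(\<Sum>i\<in>{..<n}-{p}. \<phi> u i * \<phi> x i) \<le> 0" by (intro sum_nonpos) (simp add: not_less)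
        thus False using pos by simp
      qed
      then obtain i where i: "i < n" "i \<noteq> p" "\<phi> u i * \<phi> x i > 0" by blast
      have "\<not> \<phi> u i > 0"
      proof
        assume "\<phi> u i > 0"
        hence "\<phi> u i = 1" using pos1 u(1) i(1) by blast
        thus False using spec_uniq[OF u(1) i(1) p(1)] u(2) i(2) by simp
      qed
      moreover have "\<phi> u i \<noteq> 0" using i(3) by auto
      ultimately have ui: "\<phi> u i < 0" by simp
      hence xi: "\<phi> x i < 0" using i(3) by (simp add: zero_less_mult_iff)
      have "\<phi> x i \<noteq> -2" using spec_uniq[OF xV i(1) p(1)] p(2) i(2) by auto
      hence xi1: "\<phi> x i = -1" using vals[OF xV i(1)] xi by auto
      have "i \<noteq> k"
      proof
        assume ik: "i = k"
        have "u = v" using kuniq[OF u(1)] ui ik by simp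
        moreover have "x = v" using kuniq[OF xV] xi ik by simp
        ultimately show False using ux by simp
      qed
      thus ?thesis using i(1) xi1 by blast
    next
      case False
      then obtain a where a: "a < n" "\<phi> x a = 1" using spec_ex[OF xV] by blast
      have other: "\<exists>j<n. j \<noteq> a \<and> j \<noteq> k \<and> \<phi> x j \<noteq> 0"
      proof (cases "x = v")
        case True
        thus ?thesis using HC a by blast
      next
        case xv: False
        have "\<exists>j<n. j \<noteq> a \<and> \<phi> x j \<noteq> 0"
        proof (rule ccontr)
          assume "\<not> ?thesis"
          hence "\<forall>j<n. \<phi> x j * \<phi> x j = (if j = a then 1 else 0)" using a by auto
          hence "(\<Sum>j<n. \<phi> x j * \<phi> x j) = (\<Sum>j<n. if j = a then 1 else 0)" by simp
          also have "\<dots> = 1" using a(1) by simp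
          finally have "d x = -1" using Qd[OF xV] unfolding Qn_def by simp
          thus False using minl xV unfolding minimal_plumbing_def by blast
        qed
        then obtain j where j: "j<n" "j \<noteq> a" "\<phi> x j \<noteq> 0" by blast
        have "j \<noteq> k"
        proof
          assume "j = k"
          hence "x = v" using kuniq[OF xV] j(3) by simp
          thus False using xv by simp
        qed
        thus ?thesis using j by blast
      qed
      then obtain j where j: "j < n" "j \<noteq> a" "j \<noteq> k" "\<phi> x j \<noteq> 0" by blast
      have "\<phi> x j \<noteq> 1" using spec_uniq[OF xV j(1) a(1)] a(2) j(2) by auto
      moreover have "\<phi> x j \<noteq> -2" using False j(1) by blast
      ultimately have xj: "\<phi> x j = -1" using vals[OF xV j(1) j(4)] by auto
      thus ?thesis using j by blast
    qed
    have H4: "\<exists>y\<in>V. \<exists>i<n. \<phi> y i > 0 \<and> \<phi> x i < 0" if xV: "x \<in> V" for x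
    proof -
      obtain i where i: "i < n" "i \<noteq> k" "\<phi> x i = -1" using inm[OF xV] by blast
      obtain y where y: "y \<in> V" "\<phi> y i = 1" using owner[OF i(1,2)] by blast
      show ?thesis using i y by force
    qed
    have "{i. i < n \<and> type5 V \<phi> i} \<noteq> {}" using t5 unfolding n_def by force
    then obtain p where p: "p < n" "type5 V \<phi> p" by blast
    hence "count (index_coeffs V \<phi> p) (-2) = 1" unfolding type5_def by simp
    hence "card {x\<in>V. \<phi> x p = -2} = 1" using cnt[of "-2" p] by simp
    hence "{x\<in>V. \<phi> x p = -2} \<noteq> {}" by force
    then obtain w where w: "w \<in> V" "\<phi> w p = -2" by blast
    have wle: "\<phi> w i \<le> 0" if i: "i < n" for i
    proof (rule ccontr)
      assume "\<not> ?thesis"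
      hence "\<phi> w i = 1" using pos1[OF w(1) i] by simp
      hence "i = p" using spec_uniq[OF w(1) i p(1)] w(2) by simp
      thus False using w(2) \<open>\<phi> w i = 1\<close> by simp
    qed
    have H1: "\<phi> x i \<le> 1" if "x \<in> V" "i < n" for x i
      using pos1[OF that] by (cases "\<phi> x i > 0") auto
    have H2: "x = y" if "x \<in> V" "y \<in> V" "i < n" "\<phi> x i > 0" "\<phi> y i > 0" for x y i
    proof -
      have "x \<in> {x\<in>V. \<phi> x i = 1}" "y \<in> {x\<in>V. \<phi> x i = 1}" using pos1 that by auto
      thus ?thesis using card_le1_unique[OF finc one_le[OF that(3)]] by blast
    qed
    have H3: "i = j" if "x \<in> V" "i < n" "j < n" "\<phi> x i > 0" "\<phi> x j > 0" for x i j
      using spec_uniq[OF that(1,2,3)] pos1[OF that(1,2,4)] pos1[OF that(1,3,5)] by simp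
    show False
    proof (rule main_contra[where V=V and E=E and \<phi>=\<phi> and n=n and w=w])
      show "finite V" by (fact fin)
      show "\<And>x y. E x y \<Longrightarrow> x \<in> V \<and> y \<in> V \<and> x \<noteq> y" by (fact Ein)
      show "\<forall>x\<in>V. \<forall>y\<in>V. E\<^sup>*\<^sup>* x y" by (fact conn)
      show "\<And>x y. x \<in> V \<Longrightarrow> y \<in> V \<Longrightarrow> x \<noteq> y \<Longrightarrow>
              (\<Sum>i<n. \<phi> x i * \<phi> y i) = (if E x y then -1 else 0)" by (fact dotE)
      show "\<And>x i. x \<in> V \<Longrightarrow> i < n \<Longrightarrow> \<phi> x i \<le> 1" by (fact H1)
      show "\<And>x y i. x \<in> V \<Longrightarrow> y \<in> V \<Longrightarrow> i < n \<Longrightarrow> \<phi> x i > 0 \<Longrightarrow> \<phi> y i > 0 \<Longrightarrow> x = y" by (fact H2)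
      show "\<And>x i j. x \<in> V \<Longrightarrow> i < n \<Longrightarrow> j < n \<Longrightarrow> \<phi> x i > 0 \<Longrightarrow> \<phi> x j > 0 \<Longrightarrow> i = j" by (fact H3)
      show "\<And>x. x \<in> V \<Longrightarrow> \<exists>y\<in>V. \<exists>i<n. \<phi> y i > 0 \<and> \<phi> x i < 0" by (fact H4)
      show "w \<in> V" by (fact w(1))
      show "\<And>i. i < n \<Longrightarrow> \<phi> w i \<le> 0" by (fact wle)
    qed
  qed
  then obtain a where a: "a < n" "\<phi> v a = 1" "\<forall>j<n. j \<noteq> a \<longrightarrow> j \<noteq> k \<longrightarrow> \<phi> v j = 0" by blast
  have vk: "\<phi> v k = -1" using kval[OF v] .
  have ak: "a \<noteq> k" using a(2) vk by auto
  have feq: "\<phi> v = (\<lambda>j. unitv a j - unitv k j)"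
  proof
    fix j
    show "\<phi> v j = unitv a j - unitv k j"
    proof (cases "j < n")
      case True thus ?thesis using a vk ak unfolding unitv_def by auto
    next
      case False
      hence "\<phi> v j = 0" using zero[OF v(1)] by simp
      thus ?thesis using False a(1) kn unfolding unitv_def by auto
    qed
  qed
  have "(\<Sum>j<n. \<phi> v j * \<phi> v j) = (\<Sum>j\<in>{a,k}. \<phi> v j * \<phi> v j)"
  proof (rule sum.mono_neutral_right)
    show "finite {..<n}" by simp
    show "{a,k} \<subseteq> {..<n}" using a(1) kn by auto
    show "\<forall>j\<in>{..<n} - {a,k}. \<phi> v j * \<phi> v j = 0" using a(3) by auto
  qed
  also have "\<dots> = 2" using ak a(2) vk by simp
  finally have "d v = -2" using Qd[OF v(1)] unfolding Qn_def by simp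
  thus ?thesis using feq a(1) unfolding n_def by blast
qed
end
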